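(* Let $A=\begin{pmatrix} a & b\\ b & d\end{pmatrix}$ be a positive symmetric $2\times 2$ matrix. Let $\lambda=\left(abd+b^2\sqrt{ad}\right)^{-1/2}$ and $D=\begin{pmatrix} \lambda\sqrt{bd} & 0\\ 0 & \lambda\sqrt{ab}\end{pmatrix}$. Then the alternate minimization limit of $A$ is the doubly stochastic matrix \[ S(A)=DAD=\begin{pmatrix}\alpha & \beta\\ \beta & \alpha\end{pmatrix},\qquad \alpha=\frac{\sqrt{ad}}{\sqrt{ad}+b},\quad \beta=\frac{b}{\sqrt{ad}+b}. \]
   Context: A positive matrix has all entries positive. For an $n\times n$ matrix $A=(a_{i,j})$ let $\mathrm{row}_i(A)=\sum_j a_{i,j}$ and $\mathrm{col}_j(A)=\sum_i a_{i,j}$; $A$ is doubly stochastic if all row and column sums equal $1$. For positive $A$ let $X(A)=\mathrm{diag}(1/\mathrm{row}_1(A),\ldots,1/\mathrm{row}_n(A))$ and $Y(A)=\mathrm{diag}(1/\mathrm{col}_1(A),\ldots,1/\mathrm{col}_n(A))$. The alternate minimization sequence of $A$ is $A^{(0)}=A$, $A^{(2k+1)}=A^{(2k)}\,Y(A^{(2k)})$, $A^{(2k+2)}=X(A^{(2k+1)})\,A^{(2k+1)}$ ($k\ge 0$); its limit $S(A)=\lim_{\ell\to\infty}A^{(\ell)}$ is the alternate minimization limit of $A$. *)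

theory Defs
  imports "HOL-Analysis.Analysis"
begin

definition positive_matrix :: "real^'n^'n \<Rightarrow> bool" where
  "positive_matrix A \<longleftrightarrow> (\<forall>i j. A $ i $ j > 0)"

definition row_sum :: "real^'n^'n \<Rightarrow> 'n \<Rightarrow> real" where
  "row_sum A i = (\<Sum>j\<in>UNIV. A $ i $ j)"

definition col_sum :: "real^'n^'n \<Rightarrow> 'n \<Rightarrow> real" where
  "col_sum A j = (\<Sum>i\<in>UNIV. A $ i $ j)"

definition doubly_stochastic :: "real^'n^'n \<Rightarrow> bool" where
  "doubly_stochastic A \<longleftrightarrow> (\<forall>i. row_sum A i = 1) \<and> (\<forall>j. col_sum A j = 1)"

definition Xmat :: "real^'n^'n \<Rightarrow> real^'n^'n" where
  "Xmat A = (\<chi> i j. if i = j then 1 / row_sum A i else 0)"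

definition Ymat :: "real^'n^'n \<Rightarrow> real^'n^'n" where
  "Ymat A = (\<chi> i j. if i = j then 1 / col_sum A j else 0)"

fun am_seq :: "real^'n^'n \<Rightarrow> nat \<Rightarrow> real^'n^'n" where
  "am_seq A 0 = A"
| "am_seq A (Suc k) =
     (if even k then am_seq A k ** Ymat (am_seq A k)
      else Xmat (am_seq A k) ** am_seq A k)"

definition am_limit :: "real^'n^'n \<Rightarrow> real^'n^'n" where
  "am_limit A = lim (am_seq A)"

end

theory Submission imports Defs begin

definition M2 :: "real \<Rightarrow> real \<Rightarrow> real \<Rightarrow> real \<Rightarrow> real^2^2" where
  "M2 p q r s = vector [vector [p, q], vector [r, s]]"

lemma M2_nth [simp]: "M2 p q r s $ 1 $ 1 = p" "M2 p q r s $ 1 $ 2 = q"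
  "M2 p q r s $ 2 $ 1 = r" "M2 p q r s $ 2 $ 2 = s"
  by (simp_all add: M2_def)

lemma M2_eq_iff: "(N::real^2^2) = M2 p q r s \<longleftrightarrow> N$1$1 = p \<and> N$1$2 = q \<and> N$2$1 = r \<and> N$2$2 = s"
  by (auto simp: vec_eq_iff forall_2)

lemma M2_mult: "M2 p q r s  **  M2 p2 q2 r2 s2 = M2 (p * p2 + q * r2) (p * q2 + q * s2) (r * p2 + s * r2) (r * q2 + s * s2)"
  by (simp add: M2_eq_iff matrix_matrix_mult_def sum_2)

lemma M2_row: "row_sum (M2 p q r s) 1 = p + q" "row_sum (M2 p q r s) 2 = r + s"
  by (simp_all add: row_sum_def sum_2)
lemma M2_col: "col_sum (M2 p q r s) 1 = p + r" "col_sum (M2 p q r s) 2 = q + s"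
  by (simp_all add: col_sum_def sum_2)

lemma Xmat_M2: "Xmat (M2 p q r s) = M2 (1/(p+q)) 0 0 (1/(r+s))"
  by (simp add: M2_eq_iff Xmat_def M2_row)
lemma Ymat_M2: "Ymat (M2 p q r s) = M2 (1/(p+r)) 0 0 (1/(q+s))"
  by (simp add: M2_eq_iff Ymat_def M2_col)

definition Cm :: "real \<Rightarrow> real \<Rightarrow> real \<Rightarrow> real \<Rightarrow> real^2^2" where
  "Cm a b d x = M2 (a/(a+x * b)) (b/(b+x * d)) (x * b/(a+x * b)) (x * d/(b+x * d))"
definition Rm :: "real \<Rightarrow> real \<Rightarrow> real \<Rightarrow> real \<Rightarrow> real^2^2" where
  "Rm a b d x = M2 (a/(a+x * b)) (x * b/(a+x * b)) (b/(b+x * d)) (x * d/(b+x * d))"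
definition hh :: "real \<Rightarrow> real \<Rightarrow> real \<Rightarrow> real \<Rightarrow> real" where
  "hh a b d x = (a + x * b)/(b + x * d)"

lemma step0: assumes "a>0" "b>0" "d>0"
  shows "M2 a b b d ** Ymat (M2 a b b d) = Cm a b d 1"
  using assms by (simp add: Ymat_M2 M2_mult Cm_def M2_eq_iff)

lemma XM2: "Xmat (M2 p q r s) ** M2 p q r s = M2 (p/(p+q)) (q/(p+q)) (r/(r+s)) (s/(r+s))"
  by (simp add: Xmat_M2 M2_mult)
lemma YM2: "M2 p q r s ** Ymat (M2 p q r s) = M2 (p/(p+r)) (q/(q+s)) (r/(p+r)) (s/(q+s))"
  by (simp add: Ymat_M2 M2_mult)

lemma L0: fixes p q u v :: real assumes "u>0" "v>0" "p>0" "q>0"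
  shows "p/u + q/v = (p * v + q * u)/(u * v)"
  using assms by (simp add: field_simps)
lemma L1: fixes p q u v :: real assumes "u>0" "v>0" "p>0" "q>0"
  shows "(p/u)/(p/u + q/v) = p/(p + (u/v) * q)"
proof -
  have "p * v + q * u > 0" using assms by (simp add: add_pos_pos)
  moreover have "p + (u/v) * q = (p * v + q * u)/v" using assms by (simp add: field_simps)
  ultimately show ?thesis using assms by (simp add: L0 field_simps)
qed
lemma L1b: fixes p q u v :: real assumes "u>0" "v>0" "p>0" "q>0"
  shows "(q/v)/(p/u + q/v) = (u/v) * q/(p + (u/v) * q)"
proof -
  have "p * v + q * u > 0" using assms by (simp add: add_pos_pos)
  moreover have "p + (u/v) * q = (p * v + q * u)/v" using assms by (simp add: field_simps)
  ultimately show ?thesis using assms by (simp add: L0 field_simps)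
qed
lemma L3: fixes p q u v x :: real assumes "x>0" "u>0" "v>0" "p>0" "q>0"
  shows "(x * p/u)/(x * p/u + x * q/v) = (p/u)/(p/u + q/v)" "(x * q/v)/(x * p/u + x * q/v) = (q/v)/(p/u + q/v)"
proof -
  have e: "x * p/u + x * q/v = x * (p/u + q/v)" by (simp add: field_simps)
  show "(x * p/u)/(x * p/u + x * q/v) = (p/u)/(p/u + q/v)" unfolding e using assms by simp
  show "(x * q/v)/(x * p/u + x * q/v) = (q/v)/(p/u + q/v)" unfolding e using assms by simp
qed

lemma stepC: assumes "a>0" "b>0" "d>0" "x>0"
  shows "Xmat (Cm a b d x) ** Cm a b d x = Rm a b d (hh a b d x)"
proof -
  define u where "u = a + x * b"
  define v where "v = b + x * d"
  have p: "u>0" "v>0" using assms by (auto simp: u_def v_def intro: add_pos_pos)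
  have cm: "Cm a b d x = M2 (a/u) (b/v) (x * b/u) (x * d/v)" by (simp add: Cm_def u_def v_def)
  have hx: "hh a b d x = u/v" by (simp add: hh_def u_def v_def)
  show ?thesis unfolding hx Rm_def cm XM2 M2_eq_iff M2_nth
    using assms p by (simp only: L1 L1b L3 assms p simp_thms)
qed

lemma stepR: assumes "a>0" "b>0" "d>0" "x>0"
  shows "Rm a b d x ** Ymat (Rm a b d x) = Cm a b d (hh a b d x)"
proof -
  define u where "u = a + x * b"
  define v where "v = b + x * d"
  have p: "u>0" "v>0" using assms by (auto simp: u_def v_def intro: add_pos_pos)
  have cm: "Rm a b d x = M2 (a/u) (x * b/u) (b/v) (x * d/v)" by (simp add: Rm_def u_def v_def)
  have hx: "hh a b d x = u/v" by (simp add: hh_def u_def v_def)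
  show ?thesis unfolding hx Cm_def cm YM2 M2_eq_iff M2_nth
    using assms p by (simp only: L1 L1b L3 assms p simp_thms)
qed


lemma hh_pos: "a>0 \<Longrightarrow> b>0 \<Longrightarrow> d>0 \<Longrightarrow> x>0 \<Longrightarrow> hh a b d x > 0"
  unfolding hh_def by (intro divide_pos_pos add_pos_pos mult_pos_pos) auto

definition xs :: "real \<Rightarrow> real \<Rightarrow> real \<Rightarrow> nat \<Rightarrow> real" where
  "xs a b d n = (hh a b d ^^ n) 1"

lemma xs_Suc: "xs a b d (Suc n) = hh a b d (xs a b d n)"
  by (simp add: xs_def)
lemma xs_pos: "a>0 \<Longrightarrow> b>0 \<Longrightarrow> d>0 \<Longrightarrow> xs a b d n > 0"
  by (induction n) (auto simp: xs_Suc hh_pos xs_def[of _ _ _ 0])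

lemma am_seq_form:
  assumes "a>0" "b>0" "d>0"
  shows "am_seq (M2 a b b d) (Suc n) = (if even n then Cm a b d (xs a b d n) else Rm a b d (xs a b d n))"
proof (induction n)
  case 0
  then show ?case using step0[OF assms] by (simp add: xs_def)
next
  case (Suc n)
  have xp: "xs a b d n > 0" using xs_pos assms by blast
  show ?case
  proof (cases "even n")
    case True
    then show ?thesis using Suc stepC[OF assms xp] by (simp add: xs_Suc)
  next
    case False
    then show ?thesis using Suc stepR[OF assms xp] by (simp add: xs_Suc)
  qed
qed

lemma G: fixes P Q R X Y :: real assumes "Q>0" "R>0" "Y>0"
  shows "(P * X/Q)/(R * Y/Q) = (P/R) * (X/Y)"
  using assms by (simp add: field_simps)

lemma xs_lim:
  assumes "a>0" "b>0" "d>0"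
  shows "xs a b d \<longlonglongrightarrow> sqrt (a/d)"
proof -
  define c where "c = sqrt (a/d)"
  have c: "c > 0" "c * c = a/d" using assms by (auto simp: c_def)
  have ac: "a = c * c * d" using c assms by (simp add: field_simps)
  define K where "K = (b - d * c)/(b + d * c)"
  define w where "w n = (xs a b d n - c)/(xs a b d n + c)" for n
  have Kl: "norm K < 1"
  proof -
    have cd: "c * d > 0" using c assms by simp
    have l: "\<bar>b - d * c\<bar> < b + d * c" using assms cd by (simp add: abs_less_iff mult.commute)
    have p: "b + d * c > 0" using assms cd by (simp add: mult.commute)
    have "norm K = \<bar>b - d * c\<bar> / (b + d * c)" unfolding K_def using p by (simp add: abs_divide)
    also have "... < 1" using l p by simp
    finally show ?thesis .
  qed
  have hs: "(hh a b d x - c)/(hh a b d x + c) = K * ((x - c)/(x + c))" if "x > 0" for x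
  proof -
    have p: "b + x * d > 0" using that assms by (simp add: add_pos_pos)
    have e1: "hh a b d x - c = (b - d * c) * (x - c)/(b + x * d)"
      unfolding hh_def ac using p by (simp add: field_simps)
    have e2: "hh a b d x + c = (b + d * c) * (x + c)/(b + x * d)"
      unfolding hh_def ac using p by (simp add: field_simps)
    have q: "b + d * c > 0" "x + c > 0" using assms c that by (auto intro: add_pos_pos)
    show ?thesis unfolding e1 e2 K_def using G[OF p q] by simp
  qed
  have wn: "w n = K ^ n * w 0" for n
  proof (induction n)
    case (Suc n)
    have "w (Suc n) = K * w n" unfolding w_def xs_Suc by (rule hs[OF xs_pos[OF assms, of n]])
    then show ?case using Suc by simp
  qed simp
  have wf: "(\<lambda>n. w n) = (\<lambda>n. K ^ n * w 0)" by (rule ext, rule wn)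
  have "(\<lambda>n. K ^ n * w 0) \<longlonglongrightarrow> 0 * w 0"
    by (rule tendsto_mult[OF LIMSEQ_power_zero[OF Kl] tendsto_const])
  then have w0: "(\<lambda>n. w n) \<longlonglongrightarrow> 0" by (simp only: wf[symmetric] mult_zero_left)
  have xw: "xs a b d n = c * (1 + w n)/(1 - w n)" for n
  proof -
    have p: "xs a b d n + c > 0" using xs_pos[OF assms, of n] c by simp
    define y where "y = xs a b d n"
    have p': "y + c > 0" "y > 0" using p xs_pos[OF assms, of n] by (auto simp: y_def)
    have e1: "1 + w n = 2 * y/(y + c)" unfolding w_def y_def[symmetric] using p' by (simp add: field_simps)
    have e2: "1 - w n = 2 * c/(y + c)" unfolding w_def y_def[symmetric] using p' by (simp add: field_simps)
    have p2: "y + c \<noteq> 0" using p' by simp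
    have "c * (2 * y/(y + c)) / (2 * c/(y + c)) = (c * (2 * y)) / (2 * c)" using p2 by (simp add: divide_divide_eq_left)
    also have "... = y" using c by simp
    finally show ?thesis unfolding e1 e2 y_def[symmetric] by (simp add: mult.assoc)
  qed
  have "(\<lambda>n. c * (1 + w n)/(1 - w n)) \<longlonglongrightarrow> c * (1 + 0)/(1 - 0)"
    by (intro tendsto_intros w0) simp
  moreover have "xs a b d = (\<lambda>n. c * (1 + w n)/(1 - w n))" by (rule ext, rule xw)
  ultimately show ?thesis unfolding c_def by simp
qed

lemma M2_tendsto:
  assumes "(p \<longlongrightarrow> p0) F" "(q \<longlongrightarrow> q0) F" "(r \<longlongrightarrow> r0) F" "(s \<longlongrightarrow> s0) F"
  shows "((\<lambda>n. M2 (p n) (q n) (r n) (s n)) \<longlongrightarrow> M2 p0 q0 r0 s0) F"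
proof (rule vec_tendstoI)
  fix i :: 2
  show "((\<lambda>n. M2 (p n) (q n) (r n) (s n) $ i) \<longlongrightarrow> M2 p0 q0 r0 s0 $ i) F"
  proof (rule vec_tendstoI)
    fix j :: 2
    show "((\<lambda>n. M2 (p n) (q n) (r n) (s n) $ i $ j) \<longlongrightarrow> M2 p0 q0 r0 s0 $ i $ j) F"
      using exhaust_2[of i] exhaust_2[of j] assms by auto
  qed
qed


lemma H: fixes s t b :: real assumes "s>0" "t>0" "b>0"
  shows "s * s/(s * s + s/t * b) = s * t/(s * t+b)" "b/(b + s/t * (t * t)) = b/(s * t+b)"
    "s/t * b/(s * s + s/t * b) = b/(s * t+b)" "s/t * (t * t)/(b + s/t * (t * t)) = s * t/(s * t+b)"
proof -
  have q: "s * t+b > 0" using assms by (simp add: add_pos_pos)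
  have e1: "s * s + s/t * b = (s/t) * (s * t+b)" using assms by (simp add: field_simps)
  have e2: "s/t * (t * t) = s * t" using assms by simp
  have e3: "s * s/((s/t) * (s * t+b)) = ((s/t) * (s * t))/((s/t) * (s * t+b))" using assms by simp
  have ne: "s/t \<noteq> 0" using assms by simp
  show "s * s/(s * s + s/t * b) = s * t/(s * t+b)" unfolding e1 e3 using ne by (rule mult_divide_mult_cancel_left)
  show "b/(b + s/t * (t * t)) = b/(s * t+b)" unfolding e2 by (simp add: add.commute)
  show "s/t * b/(s * s + s/t * b) = b/(s * t+b)" unfolding e1 using ne by (rule mult_divide_mult_cancel_left)
  show "s/t * (t * t)/(b + s/t * (t * t)) = s * t/(s * t+b)" unfolding e2 by (simp add: add.commute)
qed

lemma CR_lim: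
  fixes a b d :: real
  assumes "a>0" "b>0" "d>0"
  shows "Cm a b d (sqrt (a/d)) = M2 (sqrt (a * d) / (sqrt (a * d) + b)) (b / (sqrt (a * d) + b)) (b / (sqrt (a * d) + b)) (sqrt (a * d) / (sqrt (a * d) + b))"
    "Rm a b d (sqrt (a/d)) = M2 (sqrt (a * d) / (sqrt (a * d) + b)) (b / (sqrt (a * d) + b)) (b / (sqrt (a * d) + b)) (sqrt (a * d) / (sqrt (a * d) + b))"
proof -
  define sa where "sa = sqrt a"
  define sd where "sd = sqrt d"
  have s: "sa > 0" "sd > 0" "a = sa * sa" "d = sd * sd" using assms by (auto simp: sa_def sd_def)
  have c: "sqrt (a/d) = sa/sd" by (simp add: sa_def sd_def real_sqrt_divide)
  have ad: "sqrt (a * d) = sa * sd" by (simp add: sa_def sd_def real_sqrt_mult)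
  show "Cm a b d (sqrt (a/d)) = M2 (sqrt (a * d) / (sqrt (a * d) + b)) (b / (sqrt (a * d) + b)) (b / (sqrt (a * d) + b)) (sqrt (a * d) / (sqrt (a * d) + b))"
    unfolding Cm_def c ad unfolding s(3) s(4) H[OF s(1) s(2) assms(2)] ..
  show "Rm a b d (sqrt (a/d)) = M2 (sqrt (a * d) / (sqrt (a * d) + b)) (b / (sqrt (a * d) + b)) (b / (sqrt (a * d) + b)) (sqrt (a * d) / (sqrt (a * d) + b))"
    unfolding Rm_def c ad unfolding s(3) s(4) H[OF s(1) s(2) assms(2)] ..
qed


lemma DAD:
  fixes a b d :: real
  assumes "a>0" "b>0" "d>0"
  shows "(vector [vector [(a * b * d + b\<^sup>2 * sqrt (a * d)) powr (-1/2) * sqrt (b * d), 0], vector [0, (a * b * d + b\<^sup>2 * sqrt (a * d)) powr (-1/2) * sqrt (a * b)]] :: real^2^2) ** M2 a b b d ** (vector [vector [(a * b * d + b\<^sup>2 * sqrt (a * d)) powr (-1/2) * sqrt (b * d), 0], vector [0, (a * b * d + b\<^sup>2 * sqrt (a * d)) powr (-1/2) * sqrt (a * b)]] :: real^2^2)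
     = M2 (sqrt (a * d) / (sqrt (a * d) + b)) (b / (sqrt (a * d) + b)) (b / (sqrt (a * d) + b)) (sqrt (a * d) / (sqrt (a * d) + b))"
proof -
  define E where "E = a * b * d + b\<^sup>2 * sqrt (a * d)"
  define l where "l = E powr (-1/2)"
  define sa where "sa = sqrt a"
  define sb where "sb = sqrt b"
  define sd where "sd = sqrt d"
  have s: "sa > 0" "sb > 0" "sd > 0" "a = sa * sa" "b = sb * sb" "d = sd * sd" using assms by (auto simp: sa_def sb_def sd_def)
  have r: "sqrt (a * d) = sa * sd" "sqrt (b * d) = sb * sd" "sqrt (a * b) = sa * sb"
    by (simp_all add: sa_def sb_def sd_def real_sqrt_mult)
  have Ep: "E > 0" unfolding E_def using assms by (simp add: add_pos_nonneg)
  have ll: "l * l = 1 / E" unfolding l_def using Ep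
    by (simp add: powr_add[symmetric] powr_neg_one)
  have "(vector [vector [l * (sb * sd), 0], vector [0, l * (sa * sb)]] :: real^2^2) ** M2 a b b d ** (vector [vector [l * (sb * sd), 0], vector [0, l * (sa * sb)]] :: real^2^2) = M2 (sa * sd / (sa * sd + b)) (b / (sa * sd + b)) (b / (sa * sd + b)) (sa * sd / (sa * sd + b))"
  proof -
    define P where "P = sa * sd * b"
    define Q where "Q = sa * sd + b"
    have PQ: "P > 0" "Q > 0" using s assms by (auto simp: P_def Q_def add_pos_pos)
    have E2: "E = P * Q" unfolding E_def P_def Q_def r(1) using s by algebra
    have f1: "l * (sb * sd) * a * (l * (sb * sd)) = (l * l) * (P * (sa * sd))"
      unfolding P_def using s by algebra
    have f2: "l * (sb * sd) * b * (l * (sa * sb)) = (l * l) * (P * b)"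
      unfolding P_def using s by algebra
    have f3: "l * (sa * sb) * b * (l * (sb * sd)) = (l * l) * (P * b)"
      unfolding P_def using s by algebra
    have f4: "l * (sa * sb) * d * (l * (sa * sb)) = (l * l) * (P * (sa * sd))"
      unfolding P_def using s by algebra
    have g: "(l * l) * (P * X) = X / Q" for X
      unfolding ll E2 using PQ by simp
    show ?thesis unfolding M2_def[symmetric] M2_mult
      by (simp add: M2_eq_iff f1 f2 f3 f4 g Q_def del: mult_zero_left mult_zero_right)
  qed
  then show ?thesis unfolding l_def E_def r .
qed


theorem theorem6:
  fixes a b d :: real
  assumes "positive_matrix (vector [vector [a, b], vector [b, d]] :: real^2^2)"
  shows "let A = (vector [vector [a, b], vector [b, d]] :: real^2^2);
             lam = (a * b * d + b\<^sup>2 * sqrt (a * d)) powr (-1/2);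
             D = (vector [vector [lam * sqrt (b * d), 0], vector [0, lam * sqrt (a * b)]] :: real^2^2);
             \<alpha> = sqrt (a * d) / (sqrt (a * d) + b);
             \<beta> = b / (sqrt (a * d) + b)
         in am_seq A \<longlonglongrightarrow> am_limit A
            \<and> am_limit A = D ** A ** D
            \<and> D ** A ** D = (vector [vector [\<alpha>, \<beta>], vector [\<beta>, \<alpha>]] :: real^2^2)
            \<and> doubly_stochastic (am_limit A)"
proof -
  have h: "(vector [vector [a, b], vector [b, d]] :: real^2^2) $ i $ j > 0" for i j
    using assms unfolding positive_matrix_def by blast
  have pa: "a > 0" using h[of 1 1] by simp
  have pb: "b > 0" using h[of 1 2] by simp
  have pd: "d > 0" using h[of 2 2] by simp
  have A: "(vector [vector [a, b], vector [b, d]] :: real^2^2) = M2 a b b d" by (simp add: M2_def)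
  define al where "al = sqrt (a * d) / (sqrt (a * d) + b)"
  define be where "be = b / (sqrt (a * d) + b)"
  define L where "L = M2 al be be al"
  have CL: "Cm a b d (sqrt (a/d)) = L" "Rm a b d (sqrt (a/d)) = L"
    using CR_lim[OF pa pb pd] unfolding L_def al_def be_def by simp_all
  have xl: "xs a b d \<longlonglongrightarrow> sqrt (a/d)" by (rule xs_lim[OF pa pb pd])
  have c0: "sqrt (a/d) > 0" using pa pd by simp
  have n1: "a + sqrt (a/d) * b \<noteq> 0" "b + sqrt (a/d) * d \<noteq> 0"
  proof -
    have "a + sqrt (a/d) * b > 0" "b + sqrt (a/d) * d > 0" using c0 pa pb pd by (simp_all add: add_pos_pos)
    then show "a + sqrt (a/d) * b \<noteq> 0" "b + sqrt (a/d) * d \<noteq> 0" by simp_all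
  qed
  have Cl: "(\<lambda>n. Cm a b d (xs a b d n)) \<longlonglongrightarrow> L"
    unfolding CL(1)[symmetric] Cm_def
    by (intro M2_tendsto tendsto_intros xl n1)
  have Rl: "(\<lambda>n. Rm a b d (xs a b d n)) \<longlonglongrightarrow> L"
    unfolding CL(2)[symmetric] Rm_def
    by (intro M2_tendsto tendsto_intros xl n1)
  have "(\<lambda>n. am_seq (M2 a b b d) (Suc n)) \<longlonglongrightarrow> L"
  proof (rule tendstoI)
    fix e :: real assume e: "e > 0"
    have "\<forall>\<^sub>F n in sequentially. dist (Cm a b d (xs a b d n)) L < e \<and> dist (Rm a b d (xs a b d n)) L < e"
      using tendstoD[OF Cl e] tendstoD[OF Rl e] by (rule eventually_conj)
    then show "\<forall>\<^sub>F n in sequentially. dist (am_seq (M2 a b b d) (Suc n)) L < e"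
      by eventually_elim (simp add: am_seq_form[OF pa pb pd] del: am_seq.simps)
  qed
  then have conv: "am_seq (M2 a b b d) \<longlonglongrightarrow> L" by (rule LIMSEQ_imp_Suc)
  have lim: "am_limit (M2 a b b d) = L" unfolding am_limit_def using conv by (rule limI)
  have sum1: "al + be = 1"
  proof -
    have "sqrt (a * d) + b > 0" using pb pa pd by (intro add_nonneg_pos) simp_all
    then show ?thesis unfolding al_def be_def add_divide_distrib[symmetric] by simp
  qed
  have ds: "doubly_stochastic L"
    unfolding doubly_stochastic_def L_def using sum1
    by (simp add: forall_2 M2_row M2_col add.commute)
  have dad: "(vector [vector [(a * b * d + b\<^sup>2 * sqrt (a * d)) powr (-1/2) * sqrt (b * d), 0], vector [0, (a * b * d + b\<^sup>2 * sqrt (a * d)) powr (-1/2) * sqrt (a * b)]] :: real^2^2) ** M2 a b b d ** (vector [vector [(a * b * d + b\<^sup>2 * sqrt (a * d)) powr (-1/2) * sqrt (b * d), 0], vector [0, (a * b * d + b\<^sup>2 * sqrt (a * d)) powr (-1/2) * sqrt (a * b)]] :: real^2^2) = L"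
    using DAD[OF pa pb pd] unfolding L_def al_def be_def .
  have L2: "L = (vector [vector [al, be], vector [be, al]] :: real^2^2)" unfolding L_def M2_def ..
  show ?thesis unfolding Let_def A
    using conv lim dad ds L2 unfolding al_def be_def by simp
qed

end
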